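(* Let $H$ be the simple graph with vertex set $\{A,B,C,D,E,F,G\}$ and edge set $\{AC, AD, AE, AF, AG, BD, BE, CE, CF, CG, DE, DG, EG\}$. Then any graph containing an induced subgraph isomorphic to $H$ is not a divisor graph.
   Context: For a nonempty set $S$ of positive integers, the divisor graph $G(S)$ has vertex set $S$, with distinct $i,j$ adjacent iff $i\mid j$ or $j\mid i$. A graph is a divisor graph if it is isomorphic to $G(S)$ for some nonempty set $S$ of positive integers. *)

theory Defs
  imports Main
begin

definition simple_graph :: "'a set \<Rightarrow> ('a \<Rightarrow> 'a \<Rightarrow> bool) \<Rightarrow> bool" where
  "simple_graph V E \<longleftrightarrow> (\<forall>x y. E x y \<longrightarrow> x \<in> V \<and> y \<in> V \<and> x \<noteq> y \<and> E y x)"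

definition graph_iso :: "'a set \<Rightarrow> ('a \<Rightarrow> 'a \<Rightarrow> bool) \<Rightarrow> 'b set \<Rightarrow> ('b \<Rightarrow> 'b \<Rightarrow> bool) \<Rightarrow> bool" where
  "graph_iso V1 E1 V2 E2 \<longleftrightarrow>
     (\<exists>f. bij_betw f V1 V2 \<and> (\<forall>x\<in>V1. \<forall>y\<in>V1. E1 x y \<longleftrightarrow> E2 (f x) (f y)))"

definition div_adj :: "nat set \<Rightarrow> nat \<Rightarrow> nat \<Rightarrow> bool" where
  "div_adj S i j \<longleftrightarrow> i \<in> S \<and> j \<in> S \<and> i \<noteq> j \<and> (i dvd j \<or> j dvd i)"

definition divisor_graph :: "'a set \<Rightarrow> ('a \<Rightarrow> 'a \<Rightarrow> bool) \<Rightarrow> bool" where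
  "divisor_graph V E \<longleftrightarrow>
     (\<exists>S::nat set. S \<noteq> {} \<and> (\<forall>n\<in>S. 0 < n) \<and> graph_iso V E S (div_adj S))"

definition has_induced_copy :: "'b set \<Rightarrow> ('b \<Rightarrow> 'b \<Rightarrow> bool) \<Rightarrow> 'a set \<Rightarrow> ('a \<Rightarrow> 'a \<Rightarrow> bool) \<Rightarrow> bool" where
  "has_induced_copy V1 E1 V E \<longleftrightarrow>
     (\<exists>W. W \<subseteq> V \<and> graph_iso V1 E1 W (\<lambda>x y. x \<in> W \<and> y \<in> W \<and> E x y))"

datatype hvert = A | B | C | D | E | F | G

definition H_edges :: "(hvert \<times> hvert) set" where
  "H_edges = {(A,C), (A,D), (A,E), (A,F), (A,G), (B,D), (B,E), (C,E), (C,F), (C,G),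
               (D,E), (D,G), (E,G)}"

definition H_adj :: "hvert \<Rightarrow> hvert \<Rightarrow> bool" where
  "H_adj x y \<longleftrightarrow> (x, y) \<in> H_edges \<or> (y, x) \<in> H_edges"

end

theory Submission
  imports Defs
begin

lemma core:
  fixes a b c d e f g :: nat
  assumes dist: "a \<noteq> e"
  and AC: "a dvd c \<or> c dvd a" and AD: "a dvd d \<or> d dvd a" and AE: "a dvd e \<or> e dvd a"
  and AF: "a dvd f \<or> f dvd a" and AG: "a dvd g \<or> g dvd a" and BD: "b dvd d \<or> d dvd b"
  and BE: "b dvd e \<or> e dvd b" and CE: "c dvd e \<or> e dvd c" and CF: "c dvd f \<or> f dvd c"
  and CG: "c dvd g \<or> g dvd c" and DE: "d dvd e \<or> e dvd d" and DG: "d dvd g \<or> g dvd d"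
  and EG: "e dvd g \<or> g dvd e"
  and AB: "\<not> a dvd b \<and> \<not> b dvd a" and BC: "\<not> b dvd c \<and> \<not> c dvd b"
  and BF: "\<not> b dvd f \<and> \<not> f dvd b" and BG: "\<not> b dvd g \<and> \<not> g dvd b"
  and CD: "\<not> c dvd d \<and> \<not> d dvd c" and DF: "\<not> d dvd f \<and> \<not> f dvd d"
  and EF: "\<not> e dvd f \<and> \<not> f dvd e" and FG: "\<not> f dvd g \<and> \<not> g dvd f"
  shows False
proof (cases "b dvd d")
  case True
  have "a dvd d" using AD AB True dvd_trans by blast
  have "g dvd d" using DG BG True dvd_trans by blast
  have "a dvd f" using AF DF \<open>a dvd d\<close> dvd_trans by blast
  have "a dvd e" using AE EF \<open>a dvd f\<close> dvd_trans by blast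
  have "a dvd g" using AG FG \<open>a dvd f\<close> dvd_trans by blast
  have "g dvd c" using CG CD \<open>g dvd d\<close> dvd_trans by blast
  have "e dvd c" using CE EF \<open>g dvd c\<close> CF FG dvd_trans by metis
  have "e dvd a" proof -
    have "e dvd b" using BE BC \<open>e dvd c\<close> dvd_trans by blast
    then show ?thesis using AE AB dvd_trans by blast
  qed
  then show False using \<open>a dvd e\<close> dist dvd_antisym by blast
next
  case False
  then have "d dvd b" using BD by blast
  have "d dvd a" using AD AB \<open>d dvd b\<close> dvd_trans by blast
  have "d dvd g" using DG BG \<open>d dvd b\<close> dvd_trans by blast
  have "f dvd a" using AF DF \<open>d dvd a\<close> dvd_trans by blast
  have "e dvd a" using AE EF \<open>f dvd a\<close> dvd_trans by blast
  have "g dvd a" using AG FG \<open>f dvd a\<close> dvd_trans by blast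
  have "c dvd g" using CG CD \<open>d dvd g\<close> dvd_trans by blast
  have "c dvd e" using CE EF \<open>c dvd g\<close> CF FG dvd_trans by metis
  have "a dvd e" proof -
    have "b dvd e" using BE BC \<open>c dvd e\<close> dvd_trans by blast
    then show ?thesis using AE AB dvd_trans by blast
  qed
  then show False using \<open>e dvd a\<close> dist dvd_antisym by blast
qed

theorem lemma2p1:
  fixes V :: "'a set" and Adj :: "'a \<Rightarrow> 'a \<Rightarrow> bool"
  assumes "simple_graph V Adj"
    and "has_induced_copy (UNIV :: hvert set) H_adj V Adj"
  shows "\<not> divisor_graph V Adj"
proof
  assume "divisor_graph V Adj"
  then obtain S :: "nat set" and g where g: "bij_betw g V S"
    and gE: "\<forall>x\<in>V. \<forall>y\<in>V. Adj x y \<longleftrightarrow> div_adj S (g x) (g y)"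
    unfolding divisor_graph_def graph_iso_def by blast
  from assms(2) obtain W f where W: "W \<subseteq> V" and f: "bij_betw f (UNIV::hvert set) W"
    and fE: "\<forall>x y. H_adj x y \<longleftrightarrow> (f x \<in> W \<and> f y \<in> W \<and> Adj (f x) (f y))"
    unfolding has_induced_copy_def graph_iso_def by blast
  define h where "h = (\<lambda>x. g (f x))"
  have fW: "\<And>x. f x \<in> W" using f bij_betwE by blast
  have fV: "\<And>x. f x \<in> V" using fW W by blast
  have injh: "inj h"
  proof -
    have "inj f" using f by (simp add: bij_betw_def)
    moreover have "inj_on g V" using g by (simp add: bij_betw_def)
    moreover have "f ` UNIV \<subseteq> V" using fV by blast
    ultimately have "inj (g \<circ> f)" by (metis comp_inj_on inj_on_subset)
    then show ?thesis by (simp add: h_def comp_def)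
  qed
  have hS: "\<And>x. h x \<in> S" unfolding h_def using g fV bij_betwE by metis
  have key: "\<And>x y. H_adj x y \<longleftrightarrow> (h x \<noteq> h y \<and> (h x dvd h y \<or> h y dvd h x))"
  proof -
    fix x y
    have "H_adj x y \<longleftrightarrow> Adj (f x) (f y)" using fE fW by simp
    also have "\<dots> \<longleftrightarrow> div_adj S (h x) (h y)" using gE fV unfolding h_def by simp
    also have "\<dots> \<longleftrightarrow> (h x \<noteq> h y \<and> (h x dvd h y \<or> h y dvd h x))"
      unfolding div_adj_def using hS by simp
    finally show "?thesis x y" .
  qed
  have ne: "h A \<noteq> h E" using injh by (simp add: inj_eq)
  have hadj: "H_adj x y" if "(x,y) \<in> H_edges" for x y using that by (simp add: H_adj_def)
  have AC: "h A dvd h C \<or> h C dvd h A" using key[of A C] hadj[of A C] by (simp add: H_edges_def)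
  have AD: "h A dvd h D \<or> h D dvd h A" using key[of A D] hadj[of A D] by (simp add: H_edges_def)
  have AE: "h A dvd h E \<or> h E dvd h A" using key[of A E] hadj[of A E] by (simp add: H_edges_def)
  have AF: "h A dvd h F \<or> h F dvd h A" using key[of A F] hadj[of A F] by (simp add: H_edges_def)
  have AG: "h A dvd h G \<or> h G dvd h A" using key[of A G] hadj[of A G] by (simp add: H_edges_def)
  have BD: "h B dvd h D \<or> h D dvd h B" using key[of B D] hadj[of B D] by (simp add: H_edges_def)
  have BE: "h B dvd h E \<or> h E dvd h B" using key[of B E] hadj[of B E] by (simp add: H_edges_def)
  have CE: "h C dvd h E \<or> h E dvd h C" using key[of C E] hadj[of C E] by (simp add: H_edges_def)
  have CF: "h C dvd h F \<or> h F dvd h C" using key[of C F] hadj[of C F] by (simp add: H_edges_def)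
  have CG: "h C dvd h G \<or> h G dvd h C" using key[of C G] hadj[of C G] by (simp add: H_edges_def)
  have DE: "h D dvd h E \<or> h E dvd h D" using key[of D E] hadj[of D E] by (simp add: H_edges_def)
  have DG: "h D dvd h G \<or> h G dvd h D" using key[of D G] hadj[of D G] by (simp add: H_edges_def)
  have EG: "h E dvd h G \<or> h G dvd h E" using key[of E G] hadj[of E G] by (simp add: H_edges_def)
  have AB: "\<not> h A dvd h B \<and> \<not> h B dvd h A" using key[of A B] injh by (auto simp: H_adj_def H_edges_def inj_eq)
  have BC: "\<not> h B dvd h C \<and> \<not> h C dvd h B" using key[of B C] injh by (auto simp: H_adj_def H_edges_def inj_eq)
  have BF: "\<not> h B dvd h F \<and> \<not> h F dvd h B" using key[of B F] injh by (auto simp: H_adj_def H_edges_def inj_eq)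
  have BG: "\<not> h B dvd h G \<and> \<not> h G dvd h B" using key[of B G] injh by (auto simp: H_adj_def H_edges_def inj_eq)
  have CD: "\<not> h C dvd h D \<and> \<not> h D dvd h C" using key[of C D] injh by (auto simp: H_adj_def H_edges_def inj_eq)
  have DF: "\<not> h D dvd h F \<and> \<not> h F dvd h D" using key[of D F] injh by (auto simp: H_adj_def H_edges_def inj_eq)
  have EF: "\<not> h E dvd h F \<and> \<not> h F dvd h E" using key[of E F] injh by (auto simp: H_adj_def H_edges_def inj_eq)
  have FG: "\<not> h F dvd h G \<and> \<not> h G dvd h F" using key[of F G] injh by (auto simp: H_adj_def H_edges_def inj_eq)
  show False by (rule core[OF ne AC AD AE AF AG BD BE CE CF CG DE DG EG AB BC BF BG CD DF EF FG])
qed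

end
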